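(* Let $d\ge2$ and $i\in\{0,\dots,d-1\}$. Let $(X,\omega)=\#^d_{t_h+it_v}\mathbb{T}^2$ be a $d$-symmetric differential with twist coordinate $[t_h+it_v]\in\mathbb{T}^2_d$. If $(X,\omega)\in\mathscr{C}_i$, then the horizontal foliation of $(X,\omega)$ contains $(i,d)$ maximal cylinders of width $\frac{d}{(i,d)}$ and $(i+1,d)$ maximal cylinders of width $\frac{d}{(i+1,d)}$. If $(X,\omega)\in\partial^{btm}\mathscr{C}_i$, then its horizontal foliation contains $(i,d)$ cylinders of width $\frac{d}{(i,d)}$.
   Context: $(a,d)=\gcd(a,d)$ with $(0,d)=d$. $\mathbb{T}^2=\mathbb{C}/(\mathbb{Z}\oplus\mathbb{Z}i)$, $\mathbb{T}^2_d=\mathbb{C}/d(\mathbb{Z}\oplus\mathbb{Z}i)$. $\#^d_v\mathbb{T}^2$ is obtained by taking $d$ copies of $\mathbb{T}^2$, slitting each along the image of $[0,v]$ and gluing one side of the slit on copy $j$ to the opposite side on copy $j+1\bmod d$ (by limits for non-injective segments); the map $t_h+it_v\mapsto\#^d_{t_h+it_v}\mathbb{T}^2$ descends to twist coordinates on $\mathbb{T}^2_d$, which (minus the integer lattice points) parametrizes the modular fiber $\mathscr{F}^{sym}_d$ of $d$-symmetric differentials over $\mathbb{T}^2$. The horizontal foliation of $\mathscr{F}^{sym}_d\cong\mathbb{T}^2_d$ consists of the $d$ open cylinders $\mathscr{C}_i=\{[t_h+it_v]:\lfloor t_v\rfloor\equiv i \bmod d,\ t_v\notin\mathbb{Z}\}$,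 $i=0,\dots,d-1$, each of width $d$ and height $1$, with bottom boundaries $\partial^{btm}\mathscr{C}_i=\{[t_h+it_v]:t_v\equiv i\bmod d\}$ (minus lattice points). *)

theory Defs
  imports "HOL-Analysis.Analysis"
begin

text \<open>Concrete model of the slit construction #^d_v T^2.
  A point of the surface is represented by a pair (j, z) with j an integer
  (the copy index, read modulo d) and z a complex number (read modulo the
  integer lattice Z + Z i).  The slit in the torus is the image of [0,v];
  its lifts to the plane are the segments [mu, mu + v], mu in the lattice.
  Moving along a straight segment, each transversal crossing of a lift of
  the slit moves one copy forward or backward (according to the side from
  which the slit is crossed); overlapping lifts are counted with
  multiplicity (this is the gluing "by limits").\<close>

definition lattice :: "complex set" where
  "lattice = {of_int a + of_int b * \<i> | a b. True}"

definition cdet :: "complex \<Rightarrow> complex \<Rightarrow> real" where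
  "cdet a b = Im (cnj a * b)"

text \<open>Signed transversal crossing of the open straight segment from a to a + w
  with the open slit lift from mu to mu + v.\<close>
definition seg_cross :: "complex \<Rightarrow> complex \<Rightarrow> complex \<Rightarrow> complex \<Rightarrow> int" where
  "seg_cross v a w \<mu> =
     (if cdet w v = 0 then 0
      else (let r = cdet (\<mu> - a) v / cdet w v; s = cdet (\<mu> - a) w / cdet w v in
            if 0 < r \<and> r < 1 \<and> 0 < s \<and> s < 1
            then (if cdet w v > 0 then 1 else -1) else 0))"

definition crossings :: "complex \<Rightarrow> complex \<Rightarrow> complex \<Rightarrow> int" where
  "crossings v a w = (\<Sum>\<mu> \<in> {\<mu> \<in> lattice. seg_cross v a w \<mu> \<noteq> 0}. seg_cross v a w \<mu>)"

definition slit_move :: "nat \<Rightarrow> complex \<Rightarrow> int \<times> complex \<Rightarrow> complex \<Rightarrow> int \<times> complex" where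
  "slit_move d v p w = ((fst p + crossings v (snd p) w) mod int d, snd p + w)"

definition same_point :: "nat \<Rightarrow> int \<times> complex \<Rightarrow> int \<times> complex \<Rightarrow> bool" where
  "same_point d p q \<longleftrightarrow> fst p mod int d = fst q mod int d \<and> snd p - snd q \<in> lattice"

definition sing_pt :: "complex \<Rightarrow> complex \<Rightarrow> bool" where
  "sing_pt v z \<longleftrightarrow> z \<in> lattice \<or> z - v \<in> lattice"

definition on_slit :: "complex \<Rightarrow> complex \<Rightarrow> bool" where
  "on_slit v z \<longleftrightarrow> (\<exists>\<mu>\<in>lattice. z \<in> closed_segment \<mu> (\<mu> + v))"

definition hreg :: "complex \<Rightarrow> complex \<Rightarrow> bool" where
  "hreg v z \<longleftrightarrow> (\<forall>t::real. \<not> sing_pt v (z + of_real t))"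

definition hclosed :: "nat \<Rightarrow> complex \<Rightarrow> int \<times> complex \<Rightarrow> bool" where
  "hclosed d v p \<longleftrightarrow> (\<exists>t::real. t > 0 \<and> same_point d (slit_move d v p (of_real t)) p)"

definition leaf_length :: "nat \<Rightarrow> complex \<Rightarrow> int \<times> complex \<Rightarrow> real" where
  "leaf_length d v p = Inf {t::real. t > 0 \<and> same_point d (slit_move d v p (of_real t)) p}"

definition cyl_pts :: "nat \<Rightarrow> complex \<Rightarrow> (int \<times> complex) set" where
  "cyl_pts d v = {p. 0 \<le> fst p \<and> fst p < int d \<and> \<not> on_slit v (snd p)
                     \<and> hreg v (snd p) \<and> hclosed d v p}"

definition cyl_step :: "nat \<Rightarrow> complex \<Rightarrow> int \<times> complex \<Rightarrow> int \<times> complex \<Rightarrow> bool" where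
  "cyl_step d v p q \<longleftrightarrow> p \<in> cyl_pts d v \<and> q \<in> cyl_pts d v \<and>
     (same_point d p q
      \<or> (\<exists>t::real. same_point d q (slit_move d v p (of_real t)))
      \<or> (\<exists>s::real. (\<forall>r \<in> closed_segment 0 s.
                       hreg v (snd p + \<i> * of_real r)
                       \<and> hclosed d v (slit_move d v p (\<i> * of_real r)))
                 \<and> same_point d q (slit_move d v p (\<i> * of_real s))))"

text \<open>Maximal horizontal cylinders: connected components of the union of the
  closed regular horizontal leaves (each represented by its off-slit points).\<close>
definition max_cylinders :: "nat \<Rightarrow> complex \<Rightarrow> (int \<times> complex) set set" where
  "max_cylinders d v = {C. \<exists>p \<in> cyl_pts d v. C = {q. equivclp (cyl_step d v) p q}}"

end

theory Submission
  imports Defs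
begin

lemma lattice_iff: "z \<in> lattice \<longleftrightarrow> Re z \<in> \<int> \<and> Im z \<in> \<int>"
proof
  assume "z \<in> lattice"
  then obtain a b where "z = of_int a + of_int b * \<i>" unfolding lattice_def by auto
  then show "Re z \<in> \<int> \<and> Im z \<in> \<int>" by simp
next
  assume "Re z \<in> \<int> \<and> Im z \<in> \<int>"
  then obtain a b where ab: "Re z = of_int a" "Im z = of_int b" by (auto elim!: Ints_cases)
  have "z = of_int a + of_int b * \<i>" by (simp add: complex_eq_iff ab)
  then show "z \<in> lattice" unfolding lattice_def by blast
qed

definition regh :: "complex \<Rightarrow> real \<Rightarrow> bool" where
  "regh v y \<longleftrightarrow> y \<notin> \<int> \<and> y - Im v \<notin> \<int>"
definition KK :: "complex \<Rightarrow> real \<Rightarrow> int set" where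
  "KK v y = {k. 0 < (y - of_int k) / Im v \<and> (y - of_int k) / Im v < 1}"
definition sg :: "complex \<Rightarrow> int" where "sg v = (if Im v > 0 then 1 else -1)"
definition gk :: "complex \<Rightarrow> int \<Rightarrow> complex \<Rightarrow> real" where
  "gk v k z = Re z - Re v * (Im z - of_int k) / Im v"
definition FF :: "complex \<Rightarrow> complex \<Rightarrow> int" where
  "FF v z = sg v * (\<Sum>k\<in>KK v (Im z). \<lfloor>gk v k z\<rfloor>)"
definition sh :: "complex \<Rightarrow> real \<Rightarrow> int" where
  "sh v y = sg v * int (card (KK v y))"
definition offs :: "complex \<Rightarrow> complex \<Rightarrow> bool" where
  "offs v z \<longleftrightarrow> (\<forall>k\<in>KK v (Im z). gk v k z \<notin> \<int>)"

lemma KK_pos: "Im v > 0 \<Longrightarrow> k \<in> KK v y \<longleftrightarrow> of_int k < y \<and> y < of_int k + Im v"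
  unfolding KK_def by (auto simp: field_simps)

lemma KK_neg: "Im v < 0 \<Longrightarrow> k \<in> KK v y \<longleftrightarrow> of_int k + Im v < y \<and> y < of_int k"
  unfolding KK_def by (auto simp: field_simps)

lemma KK_zero: "Im v = 0 \<Longrightarrow> KK v y = {}"
  unfolding KK_def by auto

lemma finite_KK: "finite (KK v y)"
proof -
  have "KK v y \<subseteq> {\<lfloor>y - \<bar>Im v\<bar>\<rfloor> .. \<lceil>y + \<bar>Im v\<bar>\<rceil>}"
  proof
    fix k assume k: "k \<in> KK v y"
    consider "Im v > 0" | "Im v < 0" | "Im v = 0" by linarith
    then show "k \<in> {\<lfloor>y - \<bar>Im v\<bar>\<rfloor> .. \<lceil>y + \<bar>Im v\<bar>\<rceil>}"
    proof cases
      case 1 then show ?thesis using k KK_pos[of v k y]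
        by (auto simp: floor_le_iff le_ceiling_iff)
    next
      case 2 then show ?thesis using k KK_neg[of v k y]
        by (auto simp: floor_le_iff le_ceiling_iff)
    next
      case 3 then show ?thesis using k KK_zero by auto
    qed
  qed
  then show ?thesis by (rule finite_subset) simp
qed

lemma hreg_iff: "hreg v z \<longleftrightarrow> regh v (Im z)"
proof
  assume h: "hreg v z"
  show "regh v (Im z)" unfolding regh_def
  proof (intro conjI notI)
    assume "Im z \<in> \<int>"
    then have "sing_pt v (z + of_real (- Re z))" unfolding sing_pt_def lattice_iff by simp
    then show False using h unfolding hreg_def by blast
  next
    assume "Im z - Im v \<in> \<int>"
    then have "sing_pt v (z + of_real (Re v - Re z))" unfolding sing_pt_def lattice_iff by simp
    then show False using h unfolding hreg_def by blast
  qed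
next
  assume "regh v (Im z)"
  then show "hreg v z" unfolding hreg_def sing_pt_def lattice_iff regh_def by simp
qed

lemma gk_add: "Im v \<noteq> 0 \<Longrightarrow> gk v k (z + w) = gk v k z + Re w - Re v * Im w / Im v"
  unfolding gk_def by (simp add: field_simps)

lemma KK_shift: "KK v (y + of_int b) = (\<lambda>k. k + b) ` KK v y"
proof -
  have "k \<in> KK v (y + of_int b) \<longleftrightarrow> k - b \<in> KK v y" for k
    unfolding KK_def by (simp add: algebra_simps)
  then show ?thesis by (auto simp: image_iff) (metis add_diff_cancel diff_add_cancel)+
qed

lemma sh_shift: "sh v (y + of_int b) = sh v y"
  unfolding sh_def KK_shift by (simp add: card_image inj_on_def)

lemma FF_lattice:
  "FF v (z + Complex (of_int a) (of_int b)) = FF v z + a * sh v (Im z)"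
proof -
  have "FF v (z + Complex (of_int a) (of_int b)) =
        sg v * (\<Sum>k\<in>KK v (Im z). \<lfloor>gk v (k + b) (z + Complex (of_int a) (of_int b))\<rfloor>)"
    unfolding FF_def by (simp add: KK_shift sum.reindex inj_on_def)
  also have "\<dots> = sg v * (\<Sum>k\<in>KK v (Im z). \<lfloor>gk v k z\<rfloor> + a)"
  proof -
    have "\<lfloor>gk v (k + b) (z + Complex (of_int a) (of_int b))\<rfloor> = \<lfloor>gk v k z\<rfloor> + a"
      if "k \<in> KK v (Im z)" for k
    proof (cases "Im v = 0")
      case True then show ?thesis using that KK_zero by auto
    next
      case False
      then have "gk v (k + b) (z + Complex (of_int a) (of_int b)) = gk v k z + of_int a"
        unfolding gk_def by (simp add: field_simps)
      then show ?thesis by simp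
    qed
    then show ?thesis by (intro arg_cong[where f="\<lambda>x. sg v * x"] sum.cong) auto
  qed
  also have "\<dots> = FF v z + a * sh v (Im z)"
    unfolding FF_def sh_def by (simp add: sum.distrib algebra_simps)
  finally show ?thesis .
qed

lemma offs_lattice:
  "offs v (z + Complex (of_int a) (of_int b)) \<longleftrightarrow> offs v z"
proof (cases "Im v = 0")
  case True then show ?thesis unfolding offs_def by (simp add: KK_zero)
next
  case False
  have "gk v (k + b) (z + Complex (of_int a) (of_int b)) = gk v k z + of_int a" for k
    using False unfolding gk_def by (simp add: field_simps)
  moreover have "x + of_int a \<in> \<int> \<longleftrightarrow> x \<in> \<int>" for x :: real
    by (metis Ints_add Ints_diff Ints_of_int add_diff_cancel_right')
  ultimately show ?thesis unfolding offs_def by (simp add: KK_shift)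
qed

lemma regh_shift: "regh v (y + of_int b) \<longleftrightarrow> regh v y"
proof -
  have "x + of_int b \<in> \<int> \<longleftrightarrow> x \<in> \<int>" for x :: real
    by (metis Ints_add Ints_diff Ints_of_int add_diff_cancel_right')
  from this[of y] this[of "y - Im v"] show ?thesis unfolding regh_def by (simp add: algebra_simps)
qed

lemma on_slit_iff:
  assumes r: "regh v (Im z)"
  shows "on_slit v z \<longleftrightarrow> \<not> offs v z"
proof
  assume "on_slit v z"
  then obtain \<mu> u where mu: "\<mu> \<in> lattice" and u: "0 \<le> u" "u \<le> 1"
    and z: "z = (1 - u) *\<^sub>R \<mu> + u *\<^sub>R (\<mu> + v)"
    unfolding on_slit_def in_segment by blast
  from mu obtain m k where mk: "Re \<mu> = of_int m" "Im \<mu> = of_int k"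
    unfolding lattice_iff by (auto elim!: Ints_cases)
  have zre: "Re z = of_int m + u * Re v" and zim: "Im z = of_int k + u * Im v"
    using z mk by (auto simp: algebra_simps)
  have "Im v \<noteq> 0"
  proof
    assume "Im v = 0" then have "Im z \<in> \<int>" using zim by simp
    then show False using r unfolding regh_def by blast
  qed
  have "u \<noteq> 0" using r zim unfolding regh_def by auto
  moreover have "u \<noteq> 1" using r zim unfolding regh_def by auto
  ultimately have u01: "0 < u" "u < 1" using u by auto
  have uq: "(Im z - of_int k) / Im v = u" using zim \<open>Im v \<noteq> 0\<close> by simp
  have "k \<in> KK v (Im z)" unfolding KK_def using uq u01 by simp
  moreover have "gk v k z = of_int m" unfolding gk_def using zre uq
    by (metis (no_types, opaque_lifting) add_diff_cancel_right' times_divide_eq_right mult.commute)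
  ultimately show "\<not> offs v z" unfolding offs_def by (metis Ints_of_int)
next
  assume "\<not> offs v z"
  then obtain k where k: "k \<in> KK v (Im z)" and g: "gk v k z \<in> \<int>" unfolding offs_def by auto
  from g obtain m where m: "gk v k z = of_int m" by (auto elim!: Ints_cases)
  have tv: "Im v \<noteq> 0" using k KK_zero by fastforce
  define u where "u = (Im z - of_int k) / Im v"
  have u01: "0 < u" "u < 1" using k unfolding KK_def u_def by auto
  define \<mu> where "\<mu> = Complex (of_int m) (of_int k)"
  have "\<mu> \<in> lattice" unfolding \<mu>_def lattice_iff by simp
  moreover have "z = (1 - u) *\<^sub>R \<mu> + u *\<^sub>R (\<mu> + v)"
  proof -
    have "Re z = of_int m + u * Re v" using m unfolding gk_def u_def by (simp add: field_simps)
    moreover have "Im z = of_int k + u * Im v" unfolding u_def using tv by simp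
    ultimately show ?thesis unfolding \<mu>_def by (simp add: complex_eq_iff algebra_simps)
  qed
  ultimately show "on_slit v z" unfolding on_slit_def in_segment using u01
    by (intro bexI[of _ \<mu>] exI[of _ u]) auto
qed

lemma KK_sub:
  assumes reg: "\<And>y. min y1 y2 \<le> y \<Longrightarrow> y \<le> max y1 y2 \<Longrightarrow> regh v y"
    and k: "k \<in> KK v y1"
  shows "k \<in> KK v y2"
proof -
  have nk: "\<not> (min y1 y2 \<le> of_int k \<and> of_int k \<le> max y1 y2)"
    using reg[of "of_int k"] unfolding regh_def by auto
  have nk2: "\<not> (min y1 y2 \<le> of_int k + Im v \<and> of_int k + Im v \<le> max y1 y2)"
    using reg[of "of_int k + Im v"] unfolding regh_def by auto
  consider "Im v > 0" | "Im v < 0" | "Im v = 0" by linarith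
  then show ?thesis
  proof cases
    case 1 then show ?thesis using k nk nk2 KK_pos[of v] by auto
  next
    case 2 then show ?thesis using k nk nk2 KK_neg[of v] by auto
  next
    case 3 then show ?thesis using k KK_zero by auto
  qed
qed

lemma KK_const:
  assumes reg: "\<And>y. min y1 y2 \<le> y \<Longrightarrow> y \<le> max y1 y2 \<Longrightarrow> regh v y"
  shows "KK v y1 = KK v y2"
proof -
  have reg': "\<And>y. min y2 y1 \<le> y \<Longrightarrow> y \<le> max y2 y1 \<Longrightarrow> regh v y"
    using reg by (simp add: min.commute max.commute)
  show ?thesis using KK_sub[OF reg] KK_sub[OF reg'] by blast
qed

lemma card_int_between:
  assumes "\<beta> \<notin> \<int>"
  shows "card {m::int. \<alpha> < of_int m \<and> of_int m < \<beta>} = nat (\<lfloor>\<beta>\<rfloor> - \<lfloor>\<alpha>\<rfloor>)"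
proof -
  have "{m::int. \<alpha> < of_int m \<and> of_int m < \<beta>} = {\<lfloor>\<alpha>\<rfloor> + 1 .. \<lfloor>\<beta>\<rfloor>}"
  proof (intro set_eqI iffI)
    fix m assume "m \<in> {m::int. \<alpha> < of_int m \<and> of_int m < \<beta>}"
    then have "\<lfloor>\<alpha>\<rfloor> < m" "of_int m \<le> \<beta>" by (auto simp: floor_less_iff)
    then show "m \<in> {\<lfloor>\<alpha>\<rfloor> + 1 .. \<lfloor>\<beta>\<rfloor>}" by (auto simp: le_floor_iff)
  next
    fix m assume m: "m \<in> {\<lfloor>\<alpha>\<rfloor> + 1 .. \<lfloor>\<beta>\<rfloor>}"
    then have "\<alpha> < of_int m" by (simp add: floor_less_iff[symmetric])
    moreover have "of_int m \<le> \<beta>" using m by (simp add: le_floor_iff)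
    moreover have "of_int m \<noteq> \<beta>" using assms by auto
    ultimately show "m \<in> {m::int. \<alpha> < of_int m \<and> of_int m < \<beta>}" by simp
  qed
  then show ?thesis by simp
qed

lemma floor_minus_nonint: "(x::real) \<notin> \<int> \<Longrightarrow> \<lfloor>- x\<rfloor> = - \<lfloor>x\<rfloor> - 1"
proof -
  assume x: "x \<notin> \<int>"
  have "of_int \<lfloor>x\<rfloor> \<noteq> x" using x by (metis Ints_of_int)
  then have "of_int \<lfloor>x\<rfloor> < x" using of_int_floor_le[of x] by linarith
  moreover have "x < of_int \<lfloor>x\<rfloor> + 1" by linarith
  ultimately show ?thesis by (intro floor_unique) (simp_all, linarith+)
qed

lemma sh_formula:
  assumes r: "regh v y"
  shows "sh v y = \<lfloor>Im v - y\<rfloor> + \<lfloor>y\<rfloor> + 1"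
proof -
  have y: "y \<notin> \<int>" and yv: "y - Im v \<notin> \<int>" using r unfolding regh_def by auto
  have vy: "Im v - y \<notin> \<int>" using yv by (metis Ints_minus minus_diff_eq)
  have f1: "\<lfloor>y - Im v\<rfloor> = - \<lfloor>Im v - y\<rfloor> - 1" using floor_minus_nonint[OF vy] by simp
  consider "Im v > 0" | "Im v < 0" | "Im v = 0" by linarith
  then show ?thesis
  proof cases
    case 1
    have "KK v y = {m::int. y - Im v < of_int m \<and> of_int m < y}"
      using KK_pos[OF 1] by (auto simp: algebra_simps)
    then have "card (KK v y) = nat (\<lfloor>y\<rfloor> - \<lfloor>y - Im v\<rfloor>)" using card_int_between[OF y] by simp
    moreover have "\<lfloor>y - Im v\<rfloor> \<le> \<lfloor>y\<rfloor>" using 1 by (intro floor_mono) simp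
    ultimately show ?thesis unfolding sh_def sg_def using 1 f1 by simp
  next
    case 2
    have "KK v y = {m::int. y < of_int m \<and> of_int m < y - Im v}"
      using KK_neg[OF 2] by (auto simp: algebra_simps)
    then have "card (KK v y) = nat (\<lfloor>y - Im v\<rfloor> - \<lfloor>y\<rfloor>)" using card_int_between[OF yv] by simp
    moreover have "\<lfloor>y\<rfloor> \<le> \<lfloor>y - Im v\<rfloor>" using 2 by (intro floor_mono) simp
    ultimately show ?thesis unfolding sh_def sg_def using 2 f1 by simp
  next
    case 3
    then show ?thesis unfolding sh_def using KK_zero[OF 3] floor_minus_nonint[OF y] by simp
  qed
qed

lemma cdet_eq: "cdet a b = Re a * Im b - Im a * Re b"
  unfolding cdet_def by simp

lemma seg_cross_nz:
  "seg_cross v a w \<mu> \<noteq> 0 \<longleftrightarrow> cdet w v \<noteq> 0 \<and>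
     0 < cdet (\<mu> - a) v / cdet w v \<and> cdet (\<mu> - a) v / cdet w v < 1 \<and>
     0 < cdet (\<mu> - a) w / cdet w v \<and> cdet (\<mu> - a) w / cdet w v < 1"
  unfolding seg_cross_def Let_def by auto

lemma seg_cross_val:
  "seg_cross v a w \<mu> \<noteq> 0 \<Longrightarrow> seg_cross v a w \<mu> = (if cdet w v > 0 then 1 else -1)"
  unfolding seg_cross_def Let_def by (auto split: if_splits)

lemma cross_identity:
  assumes "cdet w v \<noteq> 0"
  shows "Im a + (cdet (\<mu> - a) v / cdet w v) * Im w = Im \<mu> + (cdet (\<mu> - a) w / cdet w v) * Im v"
  using assms unfolding cdet_eq by (simp add: field_simps)

lemma div01: "0 < x / D \<and> x / D < 1 \<longleftrightarrow> (0 < D \<and> 0 < x \<and> x < D) \<or> (D < 0 \<and> D < x \<and> x < (0::real))"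
  by (cases "D > 0"; cases "D < 0") (auto simp: zero_less_divide_iff divide_less_eq)

lemma FF_zero: "Im v = 0 \<Longrightarrow> FF v z = 0"
  unfolding FF_def by (simp add: KK_zero)

lemma crossings_formula:
  assumes reg: "\<And>y. min (Im a) (Im a + Im w) \<le> y \<Longrightarrow> y \<le> max (Im a) (Im a + Im w) \<Longrightarrow> regh v y"
    and oa: "offs v a" and ob: "offs v (a + w)"
  shows "crossings v a w = FF v (a + w) - FF v a"
proof -
  define K where "K = KK v (Im a)"
  have Kr: "KK v (Im a + \<rho> * Im w) = K \<and> regh v (Im a + \<rho> * Im w)" if r: "0 \<le> \<rho>" "\<rho> \<le> 1" for \<rho>
  proof -
    have bnd: "min 0 (Im w) \<le> \<rho> * Im w \<and> \<rho> * Im w \<le> max 0 (Im w)"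
    proof (cases "Im w \<ge> 0")
      case True then have "\<rho> * Im w \<le> 1 * Im w" by (intro mult_right_mono) (use r in auto)
      moreover have "0 \<le> \<rho> * Im w" using True r by simp
      ultimately show ?thesis by simp
    next
      case False then have "1 * Im w \<le> \<rho> * Im w" by (intro mult_right_mono_neg) (use r in auto)
      moreover have "\<rho> * Im w \<le> 0" using False r by (simp add: mult_nonneg_nonpos)
      ultimately show ?thesis by simp
    qed
    have "KK v (Im a) = KK v (Im a + \<rho> * Im w)"
      by (rule KK_const, rule reg) (use bnd in \<open>auto simp: min_def max_def split: if_splits\<close>)
    moreover have "regh v (Im a + \<rho> * Im w)"
      by (rule reg) (use bnd in \<open>auto simp: min_def max_def split: if_splits\<close>)
    ultimately show ?thesis unfolding K_def by simp
  qed
  have Kw: "KK v (Im (a + w)) = K" using Kr[of 1] by simp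
  show ?thesis
  proof (cases "Im v = 0")
    case tv0: True
    have "{\<mu> \<in> lattice. seg_cross v a w \<mu> \<noteq> 0} = {}"
    proof (intro equals0I)
      fix \<mu> assume "\<mu> \<in> {\<mu> \<in> lattice. seg_cross v a w \<mu> \<noteq> 0}"
      then have mu: "\<mu> \<in> lattice" and nz: "seg_cross v a w \<mu> \<noteq> 0" by auto
      from nz have c: "cdet w v \<noteq> 0" and r: "0 < cdet (\<mu> - a) v / cdet w v" "cdet (\<mu> - a) v / cdet w v < 1"
        unfolding seg_cross_nz by auto
      have "Im a + (cdet (\<mu> - a) v / cdet w v) * Im w = Im \<mu>"
        using cross_identity[OF c, of a \<mu>] tv0 by simp
      moreover have "Im \<mu> \<in> \<int>" using mu unfolding lattice_iff by simp
      moreover have "regh v (Im a + (cdet (\<mu> - a) v / cdet w v) * Im w)"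
        using Kr[of "cdet (\<mu> - a) v / cdet w v"] r by (meson less_imp_le)
      ultimately show False unfolding regh_def by simp
    qed
    then show ?thesis unfolding crossings_def using FF_zero[OF tv0] by simp
  next
    case tv: False
    have gkw: "gk v k (a + w) = gk v k a + cdet w v / Im v" for k
      using tv unfolding gk_add[OF tv] cdet_eq by (simp add: field_simps)
    show ?thesis
    proof (cases "cdet w v = 0")
      case c0: True
      have "{\<mu> \<in> lattice. seg_cross v a w \<mu> \<noteq> 0} = {}" using c0 seg_cross_nz by auto
      moreover have "FF v (a + w) = FF v a" unfolding FF_def Kw gkw c0 K_def by simp
      ultimately show ?thesis unfolding crossings_def by simp
    next
      case c: False
      define D where "D = cdet w v / Im v"
      have D0: "D \<noteq> 0" using c tv unfolding D_def by simp
      define \<alpha> where "\<alpha> k = gk v k a" for k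
      define \<beta> where "\<beta> k = gk v k (a + w)" for k
      have \<beta>\<alpha>: "\<beta> k = \<alpha> k + D" for k unfolding \<alpha>_def \<beta>_def D_def gkw ..
      define B where "B k = {m::int. min (\<alpha> k) (\<beta> k) < of_int m \<and> of_int m < max (\<alpha> k) (\<beta> k)}" for k
      have rform: "cdet (Complex (of_int m) (of_int k) - a) v / cdet w v = (of_int m - \<alpha> k) / D" for m k
        unfolding \<alpha>_def D_def gk_def cdet_eq using tv c by (simp add: field_simps cdet_eq)
      have B_iff: "m \<in> B k \<longleftrightarrow> 0 < (of_int m - \<alpha> k) / D \<and> (of_int m - \<alpha> k) / D < 1" for m k
        unfolding div01 B_def \<beta>\<alpha> using D0 by (cases "D > 0") (auto simp: min_def max_def)
      have key: "seg_cross v a w (Complex (of_int m) (of_int k)) \<noteq> 0 \<longleftrightarrow> k \<in> K \<and> m \<in> B k" for m k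
      proof -
        define \<mu> where "\<mu> = Complex (of_int m) (of_int k)"
        define r where "r = cdet (\<mu> - a) v / cdet w v"
        define s where "s = cdet (\<mu> - a) w / cdet w v"
        have rr: "r = (of_int m - \<alpha> k) / D" unfolding r_def \<mu>_def rform ..
        have ident: "Im a + r * Im w = of_int k + s * Im v"
          using cross_identity[OF c, of a \<mu>] unfolding r_def s_def \<mu>_def by simp
        have "seg_cross v a w \<mu> \<noteq> 0 \<longleftrightarrow> (0 < r \<and> r < 1 \<and> 0 < s \<and> s < 1)"
          unfolding seg_cross_nz r_def s_def using c by simp
        also have "\<dots> \<longleftrightarrow> k \<in> K \<and> m \<in> B k"
        proof
          assume h: "0 < r \<and> r < 1 \<and> 0 < s \<and> s < 1"
          then have m: "m \<in> B k" unfolding B_iff rr[symmetric] by simp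
          have KK1: "KK v (Im a + r * Im w) = K" using Kr[of r] h by simp
          have "(Im a + r * Im w - of_int k) / Im v = s" using ident tv by simp
          then have "k \<in> KK v (Im a + r * Im w)" unfolding KK_def using h by simp
          then show "k \<in> K \<and> m \<in> B k" using KK1 m by simp
        next
          assume h: "k \<in> K \<and> m \<in> B k"
          then have r01: "0 < r" "r < 1" unfolding B_iff rr[symmetric] by auto
          have KK1: "KK v (Im a + r * Im w) = K" using Kr[of r] r01 by simp
          have "(Im a + r * Im w - of_int k) / Im v = s" using ident tv by simp
          moreover have "k \<in> KK v (Im a + r * Im w)" using KK1 h by simp
          ultimately have "0 < s \<and> s < 1" unfolding KK_def by simp
          then show "0 < r \<and> r < 1 \<and> 0 < s \<and> s < 1" using r01 by simp
        qed
        finally show ?thesis unfolding \<mu>_def .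
      qed
      define cp where "cp = (\<lambda>(k::int, m::int). Complex (of_int m) (of_int k))"
      have S: "{\<mu> \<in> lattice. seg_cross v a w \<mu> \<noteq> 0} = cp ` (SIGMA k:K. B k)"
      proof (intro set_eqI iffI)
        fix \<mu> assume "\<mu> \<in> {\<mu> \<in> lattice. seg_cross v a w \<mu> \<noteq> 0}"
        then have mu: "\<mu> \<in> lattice" and nz: "seg_cross v a w \<mu> \<noteq> 0" by auto
        from mu obtain m k where mk: "Re \<mu> = of_int m" "Im \<mu> = of_int k"
          unfolding lattice_iff by (auto elim!: Ints_cases)
        have mu': "\<mu> = Complex (of_int m) (of_int k)" using mk by (simp add: complex_eq_iff)
        then have "k \<in> K \<and> m \<in> B k" using key nz by simp
        then show "\<mu> \<in> cp ` (SIGMA k:K. B k)" unfolding cp_def mu' by (auto intro!: image_eqI[of _ _ "(k, m)"])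
      next
        fix \<mu> assume "\<mu> \<in> cp ` (SIGMA k:K. B k)"
        then obtain k m where km: "k \<in> K" "m \<in> B k" and mu: "\<mu> = Complex (of_int m) (of_int k)"
          unfolding cp_def by auto
        show "\<mu> \<in> {\<mu> \<in> lattice. seg_cross v a w \<mu> \<noteq> 0}"
          using key km unfolding mu lattice_iff by simp
      qed
      have inj: "inj_on cp (SIGMA k:K. B k)" unfolding cp_def inj_on_def by auto
      have finK: "finite K" unfolding K_def by (rule finite_KK)
      have finB: "finite (B k)" for k
      proof -
        have "B k \<subseteq> {\<lfloor>min (\<alpha> k) (\<beta> k)\<rfloor> .. \<lceil>max (\<alpha> k) (\<beta> k)\<rceil>}"
          unfolding B_def by (auto simp: floor_le_iff le_ceiling_iff)
        then show ?thesis by (rule finite_subset) simp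
      qed
      define sc where "sc = (if cdet w v > 0 then 1 else -1 :: int)"
      have "crossings v a w = (\<Sum>x\<in>(SIGMA k:K. B k). seg_cross v a w (cp x))"
        unfolding crossings_def S using inj by (simp add: sum.reindex)
      also have "\<dots> = (\<Sum>x\<in>(SIGMA k:K. B k). sc)"
      proof (intro sum.cong refl)
        fix x assume "x \<in> (SIGMA k:K. B k)"
        then obtain k m where "x = (k, m)" "k \<in> K" "m \<in> B k" by auto
        then have "seg_cross v a w (cp x) \<noteq> 0" using key unfolding cp_def by simp
        then show "seg_cross v a w (cp x) = sc" unfolding sc_def by (rule seg_cross_val)
      qed
      also have "\<dots> = (\<Sum>k\<in>K. sc * int (card (B k)))"
        using finK finB by (simp add: sum.Sigma[symmetric] mult.commute sum_distrib_left)
      also have "\<dots> = (\<Sum>k\<in>K. sg v * (\<lfloor>\<beta> k\<rfloor> - \<lfloor>\<alpha> k\<rfloor>))"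
      proof (intro sum.cong refl)
        fix k assume k: "k \<in> K"
        have na: "\<alpha> k \<notin> \<int>" using oa k unfolding offs_def \<alpha>_def K_def by auto
        have nb: "\<beta> k \<notin> \<int>" using ob k Kw unfolding offs_def \<beta>_def by auto
        have cD: "cdet w v = D * Im v" unfolding D_def using tv by simp
        show "sc * int (card (B k)) = sg v * (\<lfloor>\<beta> k\<rfloor> - \<lfloor>\<alpha> k\<rfloor>)"
        proof (cases "D > 0")
          case True
          then have "B k = {m::int. \<alpha> k < of_int m \<and> of_int m < \<beta> k}" unfolding B_def \<beta>\<alpha> by simp
          then have "card (B k) = nat (\<lfloor>\<beta> k\<rfloor> - \<lfloor>\<alpha> k\<rfloor>)" using card_int_between[OF nb] by simp
          moreover have "\<lfloor>\<alpha> k\<rfloor> \<le> \<lfloor>\<beta> k\<rfloor>" unfolding \<beta>\<alpha> using True by (intro floor_mono) simp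
          moreover have "sc = sg v" unfolding sc_def sg_def cD using True tv
            by (auto simp: zero_less_mult_iff)
          ultimately show ?thesis by simp
        next
          case False
          then have Dn: "D < 0" using D0 by simp
          then have "B k = {m::int. \<beta> k < of_int m \<and> of_int m < \<alpha> k}" unfolding B_def \<beta>\<alpha> by simp
          then have "card (B k) = nat (\<lfloor>\<alpha> k\<rfloor> - \<lfloor>\<beta> k\<rfloor>)" using card_int_between[OF na] by simp
          moreover have "\<lfloor>\<beta> k\<rfloor> \<le> \<lfloor>\<alpha> k\<rfloor>" unfolding \<beta>\<alpha> using Dn by (intro floor_mono) simp
          moreover have "sc = - sg v" unfolding sc_def sg_def cD using Dn tv
            by (auto simp: zero_less_mult_iff)
          ultimately show ?thesis by (simp add: algebra_simps)
        qed
      qed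
      also have "\<dots> = FF v (a + w) - FF v a"
        unfolding FF_def Kw K_def[symmetric] \<alpha>_def \<beta>_def
        by (simp add: sum_subtractf sum_distrib_left right_diff_distrib)
      finally show ?thesis .
    qed
  qed
qed

lemma lattice_diff_obtain:
  assumes "w - z \<in> lattice"
  obtains a b where "w = z + Complex (of_int a) (of_int b)"
proof -
  from assms obtain a b where "Re (w - z) = of_int a" "Im (w - z) = of_int b"
    unfolding lattice_iff by (auto elim!: Ints_cases)
  then have "w = z + Complex (of_int a) (of_int b)" by (simp add: complex_eq_iff)
  then show ?thesis by (rule that)
qed

lemma offs_lat: "w - z \<in> lattice \<Longrightarrow> offs v w \<longleftrightarrow> offs v z"
  by (erule lattice_diff_obtain) (simp add: offs_lattice)

lemma regh_lat: "w - z \<in> lattice \<Longrightarrow> regh v (Im w) \<longleftrightarrow> regh v (Im z)"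
  by (erule lattice_diff_obtain) (simp add: regh_shift)

lemma sh_lat: "w - z \<in> lattice \<Longrightarrow> sh v (Im w) = sh v (Im z)"
  by (erule lattice_diff_obtain) (simp add: sh_shift)

lemma real_add_eq: "z + of_real (of_int n) = z + Complex (of_int n) 0"
  by (simp add: complex_eq_iff)

lemma crossings_horiz:
  assumes "regh v (Im z)" "offs v z" "offs v (z + of_real t)"
  shows "crossings v z (of_real t) = FF v (z + of_real t) - FF v z"
  by (rule crossings_formula) (use assms in auto)

lemma crossings_int:
  assumes "regh v (Im z)" "offs v z"
  shows "crossings v z (of_real (of_int n)) = n * sh v (Im z)"
proof -
  have o: "offs v (z + of_real (of_int n))" unfolding real_add_eq offs_lattice[of v z n 0, simplified] using assms by simp
  show ?thesis using crossings_horiz[OF assms o] unfolding real_add_eq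
    using FF_lattice[of v z n 0] by simp
qed

lemma hclosed_of:
  assumes d: "d > 0" and r: "regh v (Im z)" and o: "offs v z"
  shows "hclosed d v (j, z)"
proof -
  have c: "crossings v z (of_real (of_int (int d))) = int d * sh v (Im z)" by (rule crossings_int[OF r o])
  have "same_point d (slit_move d v (j, z) (of_real (real d))) (j, z)"
    using c unfolding slit_move_def same_point_def lattice_iff by simp
  then show ?thesis unfolding hclosed_def using d by (intro exI[of _ "real d"]) simp
qed

lemma cyl_pts_iff:
  assumes d: "d > 0"
  shows "p \<in> cyl_pts d v \<longleftrightarrow> 0 \<le> fst p \<and> fst p < int d \<and> regh v (Im (snd p)) \<and> offs v (snd p)"
proof
  assume "p \<in> cyl_pts d v"
  then show "0 \<le> fst p \<and> fst p < int d \<and> regh v (Im (snd p)) \<and> offs v (snd p)"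
    unfolding cyl_pts_def hreg_iff using on_slit_iff by auto
next
  assume h: "0 \<le> fst p \<and> fst p < int d \<and> regh v (Im (snd p)) \<and> offs v (snd p)"
  then have "hclosed d v (fst p, snd p)" using hclosed_of[OF d] by blast
  then show "p \<in> cyl_pts d v" unfolding cyl_pts_def hreg_iff using on_slit_iff h by auto
qed

definition cinv :: "nat \<Rightarrow> complex \<Rightarrow> int \<times> complex \<Rightarrow> int \<times> int" where
  "cinv d v p = (sh v (Im (snd p)), (fst p - FF v (snd p)) mod gcd (sh v (Im (snd p))) (int d))"

lemma cinv_same_point:
  assumes "same_point d p q"
  shows "cinv d v p = cinv d v q"
proof -
  from assms have f: "fst p mod int d = fst q mod int d" and l: "snd p - snd q \<in> lattice"
    unfolding same_point_def by auto
  from l obtain a b where pq: "snd p = snd q + Complex (of_int a) (of_int b)" by (rule lattice_diff_obtain)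
  define s where "s = sh v (Im (snd q))"
  have sp: "sh v (Im (snd p)) = s" unfolding pq s_def using sh_shift[of v "Im (snd q)" b] by simp
  have Fp: "FF v (snd p) = FF v (snd q) + a * s" unfolding pq s_def FF_lattice ..
  have dd: "int d dvd fst p - fst q" using f by (simp add: mod_eq_dvd_iff)
  have g1: "gcd s (int d) dvd fst p - fst q" using dd by (meson dvd_trans gcd_dvd2)
  have g2: "gcd s (int d) dvd a * s" by simp
  have eq: "(fst p - FF v (snd p)) - (fst q - FF v (snd q)) = (fst p - fst q) - a * s"
    unfolding Fp by simp
  have "gcd s (int d) dvd (fst p - FF v (snd p)) - (fst q - FF v (snd q))"
    unfolding eq using g1 g2 by (rule dvd_diff)
  then show ?thesis unfolding cinv_def sp s_def[symmetric] by (simp add: mod_eq_dvd_iff)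
qed

lemma cinv_move:
  assumes c: "crossings v z w = FF v (z + w) - FF v z" and s: "sh v (Im (z + w)) = sh v (Im z)"
  shows "cinv d v (slit_move d v (j, z) w) = cinv d v (j, z)"
proof -
  define X where "X = j + (FF v (z + w) - FF v z)"
  have "int d dvd (X mod int d) - X" by (simp add: mod_eq_dvd_iff[symmetric])
  moreover have "(X mod int d - FF v (z + w)) - (j - FF v z) = X mod int d - X"
    unfolding X_def by simp
  ultimately have "gcd (sh v (Im z)) (int d) dvd (X mod int d - FF v (z + w)) - (j - FF v z)"
    by (metis dvd_trans gcd_dvd2)
  then show ?thesis unfolding cinv_def slit_move_def using c s X_def by (simp add: mod_eq_dvd_iff)
qed

lemma sp_refl: "same_point d p p"
  unfolding same_point_def lattice_iff by simp

lemma cinv_step: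
  assumes d: "d > 0" and st: "cyl_step d v p q"
  shows "cinv d v p = cinv d v q"
proof -
  obtain j z where p: "p = (j, z)" by (cases p)
  have pc: "p \<in> cyl_pts d v" and qc: "q \<in> cyl_pts d v" using st unfolding cyl_step_def by auto
  have rz: "regh v (Im z)" and oz: "offs v z" using pc unfolding cyl_pts_iff[OF d] p by auto
  have oq: "offs v (snd q)" using qc unfolding cyl_pts_iff[OF d] by auto
  consider "same_point d p q" | t where "same_point d q (slit_move d v p (of_real t))"
    | s where "\<forall>r \<in> closed_segment 0 s. hreg v (snd p + \<i> * of_real r) \<and> hclosed d v (slit_move d v p (\<i> * of_real r))"
      "same_point d q (slit_move d v p (\<i> * of_real s))"
    using st unfolding cyl_step_def by blast
  then show ?thesis
  proof cases
    case 1 then show ?thesis by (rule cinv_same_point)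
  next
    case (2 t)
    have "snd q - (z + of_real t) \<in> lattice" using 2 unfolding same_point_def slit_move_def p by simp
    then have ot: "offs v (z + of_real t)" using oq offs_lat by blast
    have "cinv d v (slit_move d v (j, z) (of_real t)) = cinv d v (j, z)"
      by (rule cinv_move[OF crossings_horiz[OF rz oz ot]]) simp
    then show ?thesis using cinv_same_point[OF 2] p by simp
  next
    case (3 s)
    have reg: "regh v y" if "min (Im z) (Im z + s) \<le> y" "y \<le> max (Im z) (Im z + s)" for y
    proof -
      have "y - Im z \<in> closed_segment 0 s" unfolding closed_segment_eq_real_ivl using that
        by (auto simp: min_def max_def split: if_splits)
      then have "hreg v (z + \<i> * of_real (y - Im z))" using 3 p by auto
      then show ?thesis unfolding hreg_iff by simp
    qed
    have "snd q - (z + \<i> * of_real s) \<in> lattice" using 3 unfolding same_point_def slit_move_def p by simp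
    then have ot: "offs v (z + \<i> * of_real s)" using oq offs_lat by blast
    have cr: "crossings v z (\<i> * of_real s) = FF v (z + \<i> * of_real s) - FF v z"
      by (rule crossings_formula) (use reg oz ot in auto)
    have "KK v (Im z) = KK v (Im z + s)" by (rule KK_const) (use reg in auto)
    then have shs: "sh v (Im (z + \<i> * of_real s)) = sh v (Im z)" unfolding sh_def by simp
    have "cinv d v (slit_move d v (j, z) (\<i> * of_real s)) = cinv d v (j, z)"
      by (rule cinv_move[OF cr shs])
    then show ?thesis using cinv_same_point[OF 3(2)] p by simp
  qed
qed

lemma equivclp_cinv:
  assumes d: "d > 0" and e: "equivclp (cyl_step d v) p q"
  shows "cinv d v p = cinv d v q"
  using e
proof (induction rule: equivclp_induct)
  case base then show ?case by simp
next
  case (step y z)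
  then show ?case using cinv_step[OF d, of v y z] cinv_step[OF d, of v z y] by auto
qed

lemma equivclp_mem:
  assumes e: "equivclp (cyl_step d v) p q" and p: "p \<in> cyl_pts d v"
  shows "q \<in> cyl_pts d v"
  using e
proof (induction rule: equivclp_induct)
  case base then show ?case using p .
next
  case (step y z)
  then show ?case unfolding cyl_step_def by auto
qed

lemma leaf_length_eq:
  assumes d: "d > 0" and pc: "(j, z) \<in> cyl_pts d v"
  shows "leaf_length d v (j, z) = real d / real_of_int (gcd (sh v (Im z)) (int d))"
proof -
  have rz: "regh v (Im z)" and oz: "offs v z" using pc unfolding cyl_pts_iff[OF d] by auto
  define s where "s = sh v (Im z)"
  define G where "G = gcd s (int d)"
  have G0: "G > 0" unfolding G_def using d by simp
  have Gd: "G dvd int d" unfolding G_def by simp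
  define n0 where "n0 = int d div G"
  have dG: "int d = G * n0" unfolding n0_def using Gd by simp
  have n0pos: "n0 > 0"
  proof -
    have "0 < G * n0" using d dG by simp
    then show ?thesis using G0 by (simp add: zero_less_mult_iff)
  qed
  have dvd_iff: "int d dvd n * s \<longleftrightarrow> n0 dvd n" for n
  proof -
    define d' where "d' = int d div G"
    define s' where "s' = s div G"
    have dd: "int d = G * d'" unfolding d'_def using Gd by simp
    have ss: "s = G * s'" unfolding s'_def G_def by simp
    have n0d: "n0 = d'" unfolding n0_def d'_def ..
    have cop: "coprime d' s'"
    proof -
      have "coprime (s div gcd s (int d)) (int d div gcd s (int d))"
        by (rule div_gcd_coprime) (use d in simp)
      then show ?thesis unfolding d'_def s'_def G_def by (simp add: coprime_commute)
    qed
    have "int d dvd n * s \<longleftrightarrow> G * d' dvd G * (n * s')" unfolding dd ss by (simp add: algebra_simps)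
    also have "\<dots> \<longleftrightarrow> d' dvd n * s'" using G0 by simp
    also have "\<dots> \<longleftrightarrow> d' dvd n" using cop by (simp add: coprime_dvd_mult_left_iff)
    finally show ?thesis unfolding n0d .
  qed
  define T where "T = {t::real. t > 0 \<and> same_point d (slit_move d v (j, z) (of_real t)) (j, z)}"
  have T_iff: "t \<in> T \<longleftrightarrow> (\<exists>n. t = of_int n \<and> n > 0 \<and> n0 dvd n)" for t
  proof
    assume "t \<in> T"
    then have t0: "t > 0" and sp: "same_point d (slit_move d v (j, z) (of_real t)) (j, z)" unfolding T_def by auto
    from sp have "t \<in> \<int>" unfolding same_point_def slit_move_def lattice_iff by simp
    then obtain n where n: "t = of_int n" by (auto elim: Ints_cases)
    have "crossings v z (of_real (of_int n)) = n * s" unfolding s_def by (rule crossings_int[OF rz oz])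
    then have "(j + n * s) mod int d = j mod int d" using sp unfolding same_point_def slit_move_def n by simp
    then have "int d dvd n * s" by (simp add: mod_eq_dvd_iff)
    then show "\<exists>n. t = of_int n \<and> n > 0 \<and> n0 dvd n" using n t0 dvd_iff by auto
  next
    assume "\<exists>n. t = of_int n \<and> n > 0 \<and> n0 dvd n"
    then obtain n where n: "t = of_int n" "n > 0" "n0 dvd n" by auto
    have "crossings v z (of_real (of_int n)) = n * s" unfolding s_def by (rule crossings_int[OF rz oz])
    moreover have "int d dvd n * s" using dvd_iff n by simp
    ultimately have "same_point d (slit_move d v (j, z) (of_real t)) (j, z)"
      unfolding same_point_def slit_move_def n lattice_iff by (simp add: mod_eq_dvd_iff)
    then show "t \<in> T" unfolding T_def using n by simp
  qed
  have min: "of_int n0 \<in> T" using T_iff n0pos by auto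
  have lb: "of_int n0 \<le> t" if "t \<in> T" for t
  proof -
    from that obtain n where "t = of_int n" "n > 0" "n0 dvd n" using T_iff by auto
    then show ?thesis by (simp add: zdvd_imp_le)
  qed
  have "leaf_length d v (j, z) = Inf T" unfolding leaf_length_def T_def ..
  also have "\<dots> = of_int n0" using min lb by (intro cInf_eq_minimum) auto
  also have "\<dots> = real d / real_of_int G" unfolding n0_def using Gd G0
    by (simp add: real_of_int_div)
  finally show ?thesis unfolding G_def s_def .
qed

lemma eps_one:
  assumes "(x::real) \<notin> \<int>"
  shows "\<exists>e>0. \<forall>\<eta>. \<bar>\<eta>\<bar> < e \<longrightarrow> x - \<eta> \<notin> \<int>"
proof -
  have "of_int \<lfloor>x\<rfloor> \<noteq> x" using assms by (metis Ints_of_int)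
  then have lo: "of_int \<lfloor>x\<rfloor> < x" using of_int_floor_le[of x] by linarith
  have hi: "x < of_int \<lfloor>x\<rfloor> + 1" by linarith
  define e where "e = min (x - of_int \<lfloor>x\<rfloor>) (of_int \<lfloor>x\<rfloor> + 1 - x)"
  have "e > 0" unfolding e_def using lo hi by simp
  moreover have "x - \<eta> \<notin> \<int>" if "\<bar>\<eta>\<bar> < e" for \<eta>
  proof
    assume "x - \<eta> \<in> \<int>"
    then obtain m where m: "x - \<eta> = of_int m" by (auto elim: Ints_cases)
    have "of_int \<lfloor>x\<rfloor> < (of_int m :: real)" "(of_int m :: real) < of_int \<lfloor>x\<rfloor> + 1"
      using that m unfolding e_def by (auto simp: abs_less_iff)
    then have "\<lfloor>x\<rfloor> < m" "m < \<lfloor>x\<rfloor> + 1" by linarith+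
    then show False by simp
  qed
  ultimately show ?thesis by blast
qed

lemma eps_exists:
  assumes "finite K"
  shows "(\<forall>k\<in>K. (x k :: real) \<notin> \<int>) \<Longrightarrow> \<exists>e>0. \<forall>k\<in>K. \<forall>\<eta>. \<bar>\<eta>\<bar> < e \<longrightarrow> x k - \<eta> \<notin> \<int>"
  using assms
proof (induction K rule: finite_induct)
  case empty then show ?case by (intro exI[of _ 1]) simp
next
  case (insert k K)
  then obtain e1 where e1: "e1 > 0" "\<forall>k\<in>K. \<forall>\<eta>. \<bar>\<eta>\<bar> < e1 \<longrightarrow> x k - \<eta> \<notin> \<int>" by auto
  have "x k \<notin> \<int>" using insert.prems by simp
  then obtain e2 where e2: "e2 > 0" "\<forall>\<eta>. \<bar>\<eta>\<bar> < e2 \<longrightarrow> x k - \<eta> \<notin> \<int>" using eps_one by blast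
  show ?case using e1 e2 by (intro exI[of _ "min e1 e2"]) auto
qed

lemma step_equiv: "r x y \<Longrightarrow> equivclp r x y"
  unfolding equivclp_def by (simp add: symclp_def r_into_rtranclp)

lemma equiv_trans: "equivclp r x y \<Longrightarrow> equivclp r y z \<Longrightarrow> equivclp r x z"
  using transp_equivclp by (metis transpD)

lemma lam_bnd:
  assumes "0 \<le> (l::real)" "l \<le> 1"
  shows "min 0 H \<le> l * H \<and> l * H \<le> max 0 H"
proof (cases "H \<ge> 0")
  case True then have "l * H \<le> 1 * H" by (intro mult_right_mono) (use assms in auto)
  moreover have "0 \<le> l * H" using True assms by simp
  ultimately show ?thesis by simp
next
  case False then have "1 * H \<le> l * H" by (intro mult_right_mono_neg) (use assms in auto)
  moreover have "l * H \<le> 0" using False assms by (simp add: mult_nonneg_nonpos)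
  ultimately show ?thesis by simp
qed

lemma lam_bnd2:
  assumes "0 \<le> (l::real)" "l \<le> 1"
  shows "min a b \<le> a + l * (b - a) \<and> a + l * (b - a) \<le> max a b"
proof -
  have "min 0 (b - a) \<le> l * (b - a) \<and> l * (b - a) \<le> max 0 (b - a)" by (rule lam_bnd[OF assms])
  moreover obtain t where t: "t = l * (b - a)" by simp
  ultimately have "min 0 (b - a) \<le> t \<and> t \<le> max 0 (b - a)" by simp
  then have "min a b \<le> a + t \<and> a + t \<le> max a b" by (auto simp: min_def max_def split: if_splits)
  then show ?thesis using t by simp
qed

lemma interval_sub:
  fixes a b c y :: real
  assumes "min a c \<le> b" "b \<le> max a c" "min a b \<le> y" "y \<le> max a b"
  shows "min a c \<le> y \<and> y \<le> max a c"
  using assms by (auto simp: min_def max_def split: if_splits)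

lemma climb:
  assumes d: "d > 0" and pc: "(j, z) \<in> cyl_pts d v"
    and reg: "\<And>y. min (Im z) y' \<le> y \<Longrightarrow> y \<le> max (Im z) y' \<Longrightarrow> regh v y"
  shows "\<exists>q. q \<in> cyl_pts d v \<and> Im (snd q) = y' \<and> equivclp (cyl_step d v) (j, z) q"
proof -
  have oz: "offs v z" using pc unfolding cyl_pts_iff[OF d] by simp
  define K where "K = KK v (Im z)"
  define c where "c = Re v / Im v"
  define H where "H = y' - Im z"
  have hb: "regh v (Im z + l * H) \<and> KK v (Im z + l * H) = K" if "0 \<le> l" "l \<le> 1" for l
  proof -
    have b: "min (Im z) y' \<le> Im z + l * H \<and> Im z + l * H \<le> max (Im z) y'"
      unfolding H_def by (rule lam_bnd2[OF that])
    have "KK v (Im z) = KK v (Im z + l * H)"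
      by (rule KK_const, rule reg) (use b interval_sub in blast)+
    moreover have "regh v (Im z + l * H)"
      by (rule reg) (use b in auto)
    ultimately show ?thesis unfolding K_def by simp
  qed
  obtain e where e: "e > 0" "\<forall>k\<in>K. \<forall>\<eta>. \<bar>\<eta>\<bar> < e \<longrightarrow> gk v k z - \<eta> \<notin> \<int>"
    using eps_exists[of K "\<lambda>k. gk v k z"] finite_KK oz unfolding K_def offs_def by blast
  have offh: "offs v (z + Complex (c * (l * H) - c * \<rho>) (l * H))"
    if "0 \<le> l" "l \<le> 1" "\<bar>c * \<rho>\<bar> < e" for l \<rho>
  proof (cases "Im v = 0")
    case True then show ?thesis unfolding offs_def by (simp add: KK_zero)
  next
    case False
    have KKe: "KK v (Im (z + Complex (c * (l * H) - c * \<rho>) (l * H))) = K" using hb[OF that(1,2)] by simp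
    have "gk v k (z + Complex (c * (l * H) - c * \<rho>) (l * H)) = gk v k z - c * \<rho>" for k
      unfolding gk_add[OF False] c_def by (simp add: field_simps)
    then show ?thesis unfolding offs_def KKe using e that(3) by auto
  qed
  obtain N :: nat where N: "N > 0" "\<bar>c * H\<bar> < e * real N"
  proof -
    define N where "N = nat \<lceil>\<bar>c * H\<bar> / e\<rceil> + 1"
    have "\<bar>c * H\<bar> / e < real N" unfolding N_def by linarith
    then have "\<bar>c * H\<bar> < e * real N" using e(1) by (simp add: divide_less_eq mult.commute)
    then show ?thesis using that[of N] unfolding N_def by simp
  qed
  define \<delta> where "\<delta> = H / real N"
  have cd: "\<bar>c * \<delta>\<bar> < e" unfolding \<delta>_def using N e(1)
    by (simp add: abs_mult abs_divide divide_less_eq mult.commute)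
  define zz where "zz n = z + Complex (c * (real n * \<delta>)) (real n * \<delta>)" for n :: nat
  have lamN: "real n * \<delta> = (real n / real N) * H" for n unfolding \<delta>_def by simp
  have P: "n \<le> N \<Longrightarrow> \<exists>q. q \<in> cyl_pts d v \<and> snd q = zz n \<and> equivclp (cyl_step d v) (j, z) q" for n
  proof (induction n)
    case 0
    show ?case using pc unfolding zz_def by (intro exI[of _ "(j, z)"]) (simp add: complex_eq_iff)
  next
    case (Suc n)
    then obtain q where q: "q \<in> cyl_pts d v" "snd q = zz n" "equivclp (cyl_step d v) (j, z) q" by auto
    have nN: "n < N" using Suc.prems by simp
    have vpt: "regh v (Im (zz n + \<i> * of_real (u * \<delta>))) \<and> offs v (zz n + \<i> * of_real (u * \<delta>))"
      if u: "0 \<le> u" "u \<le> 1" for u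
    proof -
      define l where "l = (real n + u) / real N"
      have l01: "0 \<le> l" "l \<le> 1" unfolding l_def using u nN N by auto
      have eqz: "zz n + \<i> * of_real (u * \<delta>) = z + Complex (c * (l * H) - c * (u * \<delta>)) (l * H)"
        unfolding zz_def l_def \<delta>_def using N by (simp add: complex_eq_iff field_simps)
      have "\<bar>c * (u * \<delta>)\<bar> < e"
      proof -
        have "\<bar>c * (u * \<delta>)\<bar> = u * \<bar>c * \<delta>\<bar>" using u by (simp add: abs_mult)
        also have "\<dots> \<le> \<bar>c * \<delta>\<bar>" using u by (simp add: mult_left_le_one_le)
        finally show ?thesis using cd by simp
      qed
      then have "offs v (zz n + \<i> * of_real (u * \<delta>))" unfolding eqz by (rule offh[OF l01])
      moreover have "regh v (Im (zz n + \<i> * of_real (u * \<delta>)))" unfolding eqz using hb[OF l01] by simp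
      ultimately show ?thesis by simp
    qed
    define r where "r = slit_move d v q (\<i> * of_real \<delta>)"
    have snr: "snd r = zz n + \<i> * of_real (1 * \<delta>)" unfolding r_def slit_move_def q(2) by simp
    have rc: "r \<in> cyl_pts d v" unfolding cyl_pts_iff[OF d]
      using vpt[of 1] snr d unfolding r_def slit_move_def by simp
    have st1: "cyl_step d v q r"
      unfolding cyl_step_def
    proof (intro conjI disjI2 q(1) rc exI[of _ \<delta>] ballI)
      fix \<rho> assume "\<rho> \<in> closed_segment 0 \<delta>"
      then obtain u where u: "0 \<le> u" "u \<le> 1" "\<rho> = u * \<delta>" unfolding in_segment by auto
      have vp: "regh v (Im (zz n + \<i> * of_real \<rho>)) \<and> offs v (zz n + \<i> * of_real \<rho>)" using vpt[OF u(1,2)] u(3) by simp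
      then show "hreg v (snd q + \<i> * of_real \<rho>)" unfolding hreg_iff q(2) by simp
      have "slit_move d v q (\<i> * of_real \<rho>) = (fst (slit_move d v q (\<i> * of_real \<rho>)), zz n + \<i> * of_real \<rho>)"
        unfolding slit_move_def q(2) by simp
      then show "hclosed d v (slit_move d v q (\<i> * of_real \<rho>))" using hclosed_of[OF d] vp by metis
    next
      show "same_point d r (slit_move d v q (\<i> * of_real \<delta>))" unfolding r_def by (rule sp_refl)
    qed
    define q' where "q' = slit_move d v r (of_real (c * \<delta>))"
    have snq: "snd q' = zz (Suc n)" unfolding q'_def slit_move_def snr zz_def
      by (simp add: complex_eq_iff algebra_simps)
    have q'c: "q' \<in> cyl_pts d v"
    proof -
      define l where "l = (real (Suc n)) / real N"
      have l01: "0 \<le> l" "l \<le> 1" unfolding l_def using nN N by auto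
      have eqz: "zz (Suc n) = z + Complex (c * (l * H) - c * 0) (l * H)"
        unfolding zz_def l_def lamN by simp
      have "offs v (zz (Suc n))" unfolding eqz by (rule offh[OF l01]) (use e in simp)
      moreover have "regh v (Im (zz (Suc n)))" unfolding eqz using hb[OF l01] by simp
      ultimately show ?thesis unfolding cyl_pts_iff[OF d] snq using d unfolding q'_def slit_move_def by simp
    qed
    have st2: "cyl_step d v r q'"
      unfolding cyl_step_def using rc q'c sp_refl unfolding q'_def by blast
    have "equivclp (cyl_step d v) (j, z) q'"
      using equiv_trans[OF equiv_trans[OF q(3) step_equiv[of "cyl_step d v", OF st1]] step_equiv[of "cyl_step d v", OF st2]] .
    then show ?case using q'c snq by blast
  qed
  obtain q where q: "q \<in> cyl_pts d v" "snd q = zz N" "equivclp (cyl_step d v) (j, z) q" using P[of N] by auto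
  have "Im (zz N) = y'" unfolding zz_def \<delta>_def H_def using N by simp
  then show ?thesis using q by (intro exI[of _ q]) simp
qed

lemma nonint_between: "of_int m < (x::real) \<Longrightarrow> x < of_int m + 1 \<Longrightarrow> x \<notin> \<int>"
proof
  assume a: "of_int m < x" "x < of_int m + 1" and "x \<in> \<int>"
  then obtain k where "x = of_int k" by (auto elim: Ints_cases)
  then have "m < k" "k < m + 1" using a by linarith+
  then show False by simp
qed

lemma normalize:
  assumes d: "d > 0" and pc: "p \<in> cyl_pts d v"
  shows "\<exists>p'. p' \<in> cyl_pts d v \<and> 0 < Im (snd p') \<and> Im (snd p') < 1 \<and> equivclp (cyl_step d v) p p'"
proof -
  define b where "b = - \<lfloor>Im (snd p)\<rfloor>"
  define p' where "p' = (fst p, snd p + Complex (of_int 0) (of_int b))"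
  have r: "regh v (Im (snd p))" and o: "offs v (snd p)" and f: "0 \<le> fst p" "fst p < int d"
    using pc unfolding cyl_pts_iff[OF d] by auto
  have r': "regh v (Im (snd p) + of_int b)" using r regh_shift by blast
  have o': "offs v (snd p + Complex (of_int 0) (of_int b))" using o offs_lattice by blast
  have p'c: "p' \<in> cyl_pts d v" unfolding cyl_pts_iff[OF d] p'_def using r' o' f by simp
  have sp: "same_point d p p'" unfolding same_point_def p'_def lattice_iff by simp
  have "cyl_step d v p p'" unfolding cyl_step_def using pc p'c sp by blast
  then have e: "equivclp (cyl_step d v) p p'" by (rule step_equiv)
  have im: "Im (snd p') = frac (Im (snd p))" unfolding p'_def b_def frac_def by simp
  have "Im (snd p) \<notin> \<int>" using r unfolding regh_def by simp
  then have "frac (Im (snd p)) \<noteq> 0" by (simp add: frac_eq_0_iff)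
  then have "0 < frac (Im (snd p))" using frac_ge_0[of "Im (snd p)"] by linarith
  then show ?thesis using p'c e im frac_lt_1 by (intro exI[of _ p']) simp
qed

lemma connect:
  assumes d: "d > 0" and pc: "p \<in> cyl_pts d v" and qc: "q \<in> cyl_pts d v"
    and ci: "cinv d v p = cinv d v q"
  shows "equivclp (cyl_step d v) p q"
proof -
  obtain p1 where p1: "p1 \<in> cyl_pts d v" "0 < Im (snd p1)" "Im (snd p1) < 1" "equivclp (cyl_step d v) p p1"
    using normalize[OF d pc] by blast
  obtain q1 where q1: "q1 \<in> cyl_pts d v" "0 < Im (snd q1)" "Im (snd q1) < 1" "equivclp (cyl_step d v) q q1"
    using normalize[OF d qc] by blast
  have ci1: "cinv d v p1 = cinv d v q1"
    using ci equivclp_cinv[OF d p1(4)] equivclp_cinv[OF d q1(4)] by simp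
  define y1 where "y1 = Im (snd p1)"
  define y2 where "y2 = Im (snd q1)"
  have r1: "regh v y1" using p1(1) unfolding cyl_pts_iff[OF d] y1_def by simp
  have r2: "regh v y2" using q1(1) unfolding cyl_pts_iff[OF d] y2_def by simp
  have fl1: "\<lfloor>y1\<rfloor> = 0" using p1 unfolding y1_def by (simp add: floor_eq_iff)
  have fl2: "\<lfloor>y2\<rfloor> = 0" using q1 unfolding y2_def by (simp add: floor_eq_iff)
  have "sh v y1 = sh v y2" using ci1 unfolding cinv_def y1_def y2_def by simp
  then have mm: "\<lfloor>Im v - y1\<rfloor> = \<lfloor>Im v - y2\<rfloor>" using sh_formula[OF r1] sh_formula[OF r2] fl1 fl2 by simp
  define m where "m = \<lfloor>Im v - y1\<rfloor>"
  have n1: "Im v - y1 \<noteq> of_int m" using r1 unfolding regh_def m_def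
    by (metis Ints_minus Ints_of_int minus_diff_eq)
  have n2: "Im v - y2 \<noteq> of_int m" using r2 unfolding regh_def m_def mm
    by (metis Ints_minus Ints_of_int minus_diff_eq)
  have b1: "of_int m < Im v - y1" "Im v - y1 < of_int m + 1"
  proof -
    have "of_int m \<le> Im v - y1" unfolding m_def by simp
    then show "of_int m < Im v - y1" by (rule order_le_neq_trans[OF _ n1[symmetric]])
    show "Im v - y1 < of_int m + 1" unfolding m_def by linarith
  qed
  have b2: "of_int m < Im v - y2" "Im v - y2 < of_int m + 1"
  proof -
    have "of_int m \<le> Im v - y2" unfolding m_def mm by simp
    then show "of_int m < Im v - y2" by (rule order_le_neq_trans[OF _ n2[symmetric]])
    show "Im v - y2 < of_int m + 1" unfolding m_def mm by linarith
  qed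
  have reg: "regh v y" if "min y1 y2 \<le> y" "y \<le> max y1 y2" for y
  proof -
    have "0 < y" "y < 1" using that p1(2,3) q1(2,3) unfolding y1_def y2_def by (auto simp: min_def max_def split: if_splits)
    then have "y \<notin> \<int>" using nonint_between[of 0 y] by simp
    moreover have "of_int m < Im v - y" "Im v - y < of_int m + 1"
      using that b1 b2 by (auto simp: min_def max_def split: if_splits)
    then have "Im v - y \<notin> \<int>" by (rule nonint_between)
    then have "y - Im v \<notin> \<int>" by (metis Ints_minus minus_diff_eq)
    ultimately show ?thesis unfolding regh_def by simp
  qed
  obtain j1 z1 where pz: "p1 = (j1, z1)" by (cases p1)
  obtain p2 where p2: "p2 \<in> cyl_pts d v" "Im (snd p2) = y2" "equivclp (cyl_step d v) p1 p2"
    using climb[OF d, of j1 z1 v y2] p1(1) reg unfolding pz y1_def by auto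
  have ci2: "cinv d v p2 = cinv d v q1" using ci1 equivclp_cinv[OF d p2(3)] by simp
  obtain j2 z2 where p2z: "p2 = (j2, z2)" by (cases p2)
  obtain jq zq where qz: "q1 = (jq, zq)" by (cases q1)
  have imz: "Im z2 = Im zq" using p2(2) unfolding p2z qz y2_def by simp
  have rz2: "regh v (Im z2)" and oz2: "offs v z2" using p2(1) unfolding p2z cyl_pts_iff[OF d] by auto
  have oq: "offs v zq" using q1(1) unfolding qz cyl_pts_iff[OF d] by auto
  define s where "s = sh v (Im zq)"
  define G where "G = gcd s (int d)"
  have "(j2 - FF v z2) mod G = (jq - FF v zq) mod G"
    using ci2 imz unfolding cinv_def p2z qz G_def s_def by simp
  then have "G dvd (jq - FF v zq) - (j2 - FF v z2)" by (metis mod_eq_dvd_iff)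
  then obtain e where e: "(jq - FF v zq) - (j2 - FF v z2) = G * e" by blast
  obtain u w where uw: "u * s + w * int d = G" unfolding G_def using bezout_int by blast
  define n where "n = u * e"
  define t where "t = Re zq - Re z2 + of_int n"
  have zt: "z2 + of_real t = zq + Complex (of_int n) (of_int 0)"
    unfolding t_def using imz by (simp add: complex_eq_iff)
  have ot: "offs v (z2 + of_real t)" unfolding zt offs_lattice using oq .
  have cr: "crossings v z2 (of_real t) = FF v zq + n * s - FF v z2"
    using crossings_horiz[OF rz2 oz2 ot] unfolding zt FF_lattice s_def by simp
  have "int d dvd jq - (j2 + (FF v zq + n * s - FF v z2))"
  proof -
    have "jq - (j2 + (FF v zq + n * s - FF v z2)) = G * e - n * s" using e by (simp add: algebra_simps)
    also have "\<dots> = int d * (w * e)" unfolding n_def uw[symmetric] by (simp add: algebra_simps)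
    finally show ?thesis by simp
  qed
  then have "same_point d q1 (slit_move d v p2 (of_real t))"
    unfolding same_point_def slit_move_def p2z qz using zt cr
    by (simp add: mod_eq_dvd_iff lattice_iff)
  then have "cyl_step d v p2 q1" unfolding cyl_step_def using p2(1) q1(1) by blast
  then have "equivclp (cyl_step d v) p2 q1" by (rule step_equiv)
  have "equivclp (cyl_step d v) p p2" by (rule equiv_trans[OF p1(4) p2(3)])
  then show ?thesis using equiv_trans[OF _ equiv_trans[OF \<open>equivclp (cyl_step d v) p2 q1\<close> equivclp_sym[OF q1(4)]]]
    by blast
qed

definition cls :: "nat \<Rightarrow> complex \<Rightarrow> int \<times> complex \<Rightarrow> (int \<times> complex) set" where
  "cls d v p = {q. equivclp (cyl_step d v) p q}"

lemma maxcyl_def': "max_cylinders d v = cls d v ` cyl_pts d v"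
  unfolding max_cylinders_def cls_def by auto

lemma cls_self: "p \<in> cls d v p"
  unfolding cls_def by (simp add: equivclp_def)

lemma cls_mem:
  assumes d: "d > 0" and p: "p \<in> cyl_pts d v" and x: "x \<in> cls d v p"
  shows "x \<in> cyl_pts d v \<and> cinv d v x = cinv d v p"
  using x equivclp_mem[of d v p x] equivclp_cinv[OF d, of v p x] p unfolding cls_def by auto

lemma cls_eq:
  assumes d: "d > 0" and p: "p \<in> cyl_pts d v" and q: "q \<in> cyl_pts d v"
  shows "cls d v p = cls d v q \<longleftrightarrow> cinv d v p = cinv d v q"
proof
  assume "cls d v p = cls d v q"
  then have "q \<in> cls d v p" using cls_self by metis
  then show "cinv d v p = cinv d v q" using cls_mem[OF d p] by simp
next
  assume "cinv d v p = cinv d v q"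
  then have e: "equivclp (cyl_step d v) p q" by (rule connect[OF d p q])
  show "cls d v p = cls d v q" unfolding cls_def
  proof (intro set_eqI iffI; simp)
    fix x assume "equivclp (cyl_step d v) p x"
    then show "equivclp (cyl_step d v) q x" by (rule equiv_trans[OF equivclp_sym[OF e]])
  next
    fix x assume "equivclp (cyl_step d v) q x"
    then show "equivclp (cyl_step d v) p x" by (rule equiv_trans[OF e])
  qed
qed

lemma exists_offs:
  shows "\<exists>x. offs v (Complex x y0)"
proof -
  define S where "S = (\<Union>k\<in>KK v y0. range (\<lambda>m::int. of_int m + Re v * (y0 - of_int k) / Im v))"
  have "countable S" unfolding S_def using finite_KK by (intro countable_UN) auto
  then have "S \<noteq> UNIV" using uncountable_UNIV_real by auto
  then obtain x where x: "x \<notin> S" by auto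
  have "offs v (Complex x y0)" unfolding offs_def
  proof
    fix k assume k: "k \<in> KK v (Im (Complex x y0))"
    show "gk v k (Complex x y0) \<notin> \<int>"
    proof
      assume "gk v k (Complex x y0) \<in> \<int>"
      then obtain m where "gk v k (Complex x y0) = of_int m" by (auto elim: Ints_cases)
      then have "x = of_int m + Re v * (y0 - of_int k) / Im v" unfolding gk_def by simp
      then have "x \<in> S" unfolding S_def using k by auto
      then show False using x by simp
    qed
  qed
  then show ?thesis by blast
qed

lemma family:
  assumes d: "d > 0" and r: "regh v y0"
  shows "\<exists>F. finite F \<and> card F = nat (gcd (sh v y0) (int d)) \<and> F \<subseteq> max_cylinders d v
          \<and> (\<forall>C\<in>F. \<forall>p\<in>C. p \<in> cyl_pts d v \<and> sh v (Im (snd p)) = sh v y0)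
          \<and> (\<forall>p\<in>cyl_pts d v. sh v (Im (snd p)) = sh v y0 \<longrightarrow> cls d v p \<in> F)"
proof -
  obtain x0 where ox: "offs v (Complex x0 y0)" using exists_offs by blast
  define z0 where "z0 = Complex x0 y0"
  define s where "s = sh v y0"
  define G where "G = gcd s (int d)"
  have G0: "G > 0" unfolding G_def using d by simp
  have Gd: "G dvd int d" unfolding G_def by simp
  define Pt where "Pt c = ((FF v z0 + c) mod int d, z0)" for c
  have Ptc: "Pt c \<in> cyl_pts d v" for c
    unfolding cyl_pts_iff[OF d] Pt_def z0_def using r ox d by simp
  have Ptinv: "cinv d v (Pt c) = (s, c mod G)" for c
  proof -
    have eqx: "((FF v z0 + c) mod int d - FF v z0) - c = (FF v z0 + c) mod int d - (FF v z0 + c)" by simp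
    have "int d dvd (FF v z0 + c) mod int d - (FF v z0 + c)" by (simp add: mod_eq_dvd_iff[symmetric])
    then have "int d dvd ((FF v z0 + c) mod int d - FF v z0) - c" unfolding eqx .
    then have "G dvd ((FF v z0 + c) mod int d - FF v z0) - c" using Gd by (meson dvd_trans)
    then have "((FF v z0 + c) mod int d - FF v z0) mod G = c mod G" by (simp add: mod_eq_dvd_iff)
    then show ?thesis unfolding cinv_def Pt_def z0_def s_def G_def by simp
  qed
  define F where "F = (\<lambda>c. cls d v (Pt c)) ` {0..<G}"
  have inj: "inj_on (\<lambda>c. cls d v (Pt c)) {0..<G}"
  proof (rule inj_onI)
    fix a b assume a: "a \<in> {0..<G}" and b: "b \<in> {0..<G}" and e: "cls d v (Pt a) = cls d v (Pt b)"
    then have "cinv d v (Pt a) = cinv d v (Pt b)" using cls_eq[OF d Ptc Ptc] by simp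
    then have "a mod G = b mod G" using Ptinv by simp
    then show "a = b" using a b by simp
  qed
  have "finite F" unfolding F_def by simp
  moreover have "card F = nat G" unfolding F_def using card_image[OF inj] by simp
  moreover have "F \<subseteq> max_cylinders d v" unfolding F_def maxcyl_def' using Ptc by auto
  moreover have "\<forall>C\<in>F. \<forall>p\<in>C. p \<in> cyl_pts d v \<and> sh v (Im (snd p)) = s"
  proof (intro ballI)
    fix C p assume "C \<in> F" "p \<in> C"
    then obtain c where "p \<in> cls d v (Pt c)" unfolding F_def by auto
    then have "p \<in> cyl_pts d v \<and> cinv d v p = cinv d v (Pt c)" using cls_mem[OF d Ptc] by blast
    then show "p \<in> cyl_pts d v \<and> sh v (Im (snd p)) = s" using Ptinv[of c] unfolding cinv_def by simp
  qed
  moreover have "\<forall>p\<in>cyl_pts d v. sh v (Im (snd p)) = s \<longrightarrow> cls d v p \<in> F"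
  proof (intro ballI impI)
    fix p assume p: "p \<in> cyl_pts d v" and sp: "sh v (Im (snd p)) = s"
    define c where "c = (fst p - FF v (snd p)) mod G"
    have c: "c \<in> {0..<G}" unfolding c_def using G0 by simp
    have "cinv d v p = (s, c)" unfolding cinv_def c_def G_def sp ..
    also have "\<dots> = cinv d v (Pt c)" using Ptinv[of c] c by simp
    finally have "cls d v p = cls d v (Pt c)" using cls_eq[OF d p Ptc] by simp
    then show "cls d v p \<in> F" unfolding F_def using c by auto
  qed
  ultimately show ?thesis unfolding s_def G_def by blast
qed

lemma gcd_floor_eq:
  assumes "(m::int) mod int d = int i"
  shows "gcd m (int d) = int (gcd i d)"
proof -
  have "gcd m (int d) = gcd (int d) (m mod int d)" by (rule gcd_red_int)
  also have "\<dots> = gcd (int d) (int i)" using assms by simp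
  also have "\<dots> = int (gcd i d)" by (simp add: gcd.commute)
  finally show ?thesis .
qed

lemma gcd_floor_eq1:
  assumes "(m::int) mod int d = int i"
  shows "gcd (m + 1) (int d) = int (gcd (i + 1) d)"
proof -
  have "(m + 1) mod int d = (int i + 1) mod int d" using assms by (metis mod_add_left_eq)
  then have "gcd (m + 1) (int d) = gcd (int i + 1) (int d)" by (metis gcd_red_int)
  also have "\<dots> = int (gcd (i + 1) d)" by (metis gcd_int_int_eq of_nat_Suc add.commute Suc_eq_plus1)
  finally show ?thesis .
qed

lemma leaf_in_family:
  assumes d: "d > 0" and p: "p \<in> cyl_pts d v" and s: "sh v (Im (snd p)) = m"
    and g: "gcd m (int d) = int n"
  shows "leaf_length d v p = real d / real n"
proof -
  have "(fst p, snd p) \<in> cyl_pts d v" using p by simp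
  from leaf_length_eq[OF d this] show ?thesis using s g by simp
qed

lemma some_mem: "C \<in> max_cylinders d v \<Longrightarrow> \<exists>p\<in>C. p \<in> cyl_pts d v"
  unfolding maxcyl_def' using cls_self by blast

theorem mainTheorem8:
  fixes d i :: nat and th tv :: real
  assumes "d \<ge> 2" and "i < d"
  shows "(tv \<notin> \<int> \<and> \<lfloor>tv\<rfloor> mod int d = int i \<longrightarrow>
            (\<exists>F1 F2. F1 \<inter> F2 = {} \<and> F1 \<union> F2 = max_cylinders d (Complex th tv)
                \<and> finite F1 \<and> finite F2
                \<and> card F1 = gcd i d \<and> card F2 = gcd (i + 1) d
                \<and> (\<forall>C\<in>F1. \<forall>p\<in>C. leaf_length d (Complex th tv) p = real d / real (gcd i d))
                \<and> (\<forall>C\<in>F2. \<forall>p\<in>C. leaf_length d (Complex th tv) p = real d / real (gcd (i + 1) d))))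
       \<and> (tv \<in> \<int> \<and> th \<notin> \<int> \<and> \<lfloor>tv\<rfloor> mod int d = int i \<longrightarrow>
            finite (max_cylinders d (Complex th tv))
            \<and> card (max_cylinders d (Complex th tv)) = gcd i d
            \<and> (\<forall>C\<in>max_cylinders d (Complex th tv). \<forall>p\<in>C.
                  leaf_length d (Complex th tv) p = real d / real (gcd i d)))"
proof (intro conjI impI)
  define v where "v = Complex th tv"
  have d: "d > 0" using assms by simp
  have tvv: "Im v = tv" unfolding v_def by simp
  {
    assume h: "tv \<notin> \<int> \<and> \<lfloor>tv\<rfloor> mod int d = int i"
    define m where "m = \<lfloor>tv\<rfloor>"
    define f where "f = tv - of_int m"
    have "of_int m \<noteq> tv" using h unfolding m_def by (metis Ints_of_int)
    then have f0: "0 < f" unfolding f_def m_def using of_int_floor_le[of tv] by linarith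
    have f1: "f < 1" unfolding f_def m_def by linarith
    define ya where "ya = f / 2"
    define yb where "yb = (1 + f) / 2"
    have ra: "regh v ya" unfolding regh_def tvv
    proof
      show "ya \<notin> \<int>" using nonint_between[of 0 ya] f0 f1 unfolding ya_def by simp
      have e: "ya - tv = - of_int m - f / 2" unfolding ya_def f_def by (simp add: field_simps)
      have "of_int (- m - 1) < ya - tv" "ya - tv < of_int (- m - 1) + 1" unfolding e using f0 f1 by simp_all
      then show "ya - tv \<notin> \<int>" by (rule nonint_between)
    qed
    have rb: "regh v yb" unfolding regh_def tvv
    proof
      show "yb \<notin> \<int>" using nonint_between[of 0 yb] f0 f1 unfolding yb_def by simp
      have e: "yb - tv = - of_int m + (1 - f) / 2" unfolding yb_def f_def by (simp add: field_simps)
      have "of_int (- m) < yb - tv" "yb - tv < of_int (- m) + 1" unfolding e using f0 f1 by simp_all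
      then show "yb - tv \<notin> \<int>" by (rule nonint_between)
    qed
    have sha: "sh v ya = m + 1"
    proof -
      have e: "tv - ya = of_int m + f / 2" unfolding ya_def f_def by (simp add: field_simps)
      have "\<lfloor>tv - ya\<rfloor> = m" unfolding e floor_eq_iff using f0 f1 by simp
      moreover have "\<lfloor>ya\<rfloor> = 0" using f0 f1 unfolding ya_def by (simp add: floor_eq_iff)
      ultimately show ?thesis using sh_formula[OF ra] tvv by simp
    qed
    have shb: "sh v yb = m"
    proof -
      have e: "tv - yb = of_int m - (1 - f) / 2" unfolding yb_def f_def by (simp add: field_simps)
      have "\<lfloor>tv - yb\<rfloor> = m - 1" unfolding e floor_eq_iff using f0 f1 by simp
      moreover have "\<lfloor>yb\<rfloor> = 0" using f0 f1 unfolding yb_def by (simp add: floor_eq_iff)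
      ultimately show ?thesis using sh_formula[OF rb] tvv by simp
    qed
    have allsh: "sh v (Im (snd p)) = m \<or> sh v (Im (snd p)) = m + 1" if "p \<in> cyl_pts d v" for p
    proof -
      define y where "y = Im (snd p)"
      have r: "regh v y" using that unfolding cyl_pts_iff[OF d] y_def by simp
      have "\<lfloor>(tv - y) + y\<rfloor> = \<lfloor>tv - y\<rfloor> + \<lfloor>y\<rfloor> \<or> \<lfloor>(tv - y) + y\<rfloor> = \<lfloor>tv - y\<rfloor> + \<lfloor>y\<rfloor> + 1"
        by (simp only: floor_add) simp
      then show ?thesis using sh_formula[OF r] tvv unfolding m_def y_def by auto
    qed
    obtain F1 where F1: "finite F1" "card F1 = nat (gcd (sh v yb) (int d))" "F1 \<subseteq> max_cylinders d v"
        "\<forall>C\<in>F1. \<forall>p\<in>C. p \<in> cyl_pts d v \<and> sh v (Im (snd p)) = sh v yb"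
        "\<forall>p\<in>cyl_pts d v. sh v (Im (snd p)) = sh v yb \<longrightarrow> cls d v p \<in> F1"
      using family[OF d rb] by blast
    obtain F2 where F2: "finite F2" "card F2 = nat (gcd (sh v ya) (int d))" "F2 \<subseteq> max_cylinders d v"
        "\<forall>C\<in>F2. \<forall>p\<in>C. p \<in> cyl_pts d v \<and> sh v (Im (snd p)) = sh v ya"
        "\<forall>p\<in>cyl_pts d v. sh v (Im (snd p)) = sh v ya \<longrightarrow> cls d v p \<in> F2"
      using family[OF d ra] by blast
    have g1: "gcd m (int d) = int (gcd i d)" using gcd_floor_eq h unfolding m_def by blast
    have g2: "gcd (m + 1) (int d) = int (gcd (i + 1) d)" using gcd_floor_eq1 h unfolding m_def by blast
    have "F1 \<inter> F2 = {}"
    proof (rule equals0I)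
      fix C assume C: "C \<in> F1 \<inter> F2"
      then obtain p where "p \<in> C" using some_mem F1(3) by blast
      then show False using C F1(4) F2(4) sha shb by fastforce
    qed
    moreover have "F1 \<union> F2 = max_cylinders d v"
    proof
      show "F1 \<union> F2 \<subseteq> max_cylinders d v" using F1(3) F2(3) by simp
      show "max_cylinders d v \<subseteq> F1 \<union> F2"
      proof
        fix C assume "C \<in> max_cylinders d v"
        then obtain p where p: "p \<in> cyl_pts d v" "C = cls d v p" unfolding maxcyl_def' by blast
        show "C \<in> F1 \<union> F2" using allsh[OF p(1)] F1(5) F2(5) p sha shb by auto
      qed
    qed
    moreover have "card F1 = gcd i d" using F1(2) shb g1 by simp
    moreover have "card F2 = gcd (i + 1) d" using F2(2) sha g2 by simp
    moreover have "\<forall>C\<in>F1. \<forall>p\<in>C. leaf_length d v p = real d / real (gcd i d)"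
      using F1(4) leaf_in_family[OF d _ _ g1] shb by simp
    moreover have "\<forall>C\<in>F2. \<forall>p\<in>C. leaf_length d v p = real d / real (gcd (i + 1) d)"
      using F2(4) leaf_in_family[OF d _ _ g2] sha by simp
    ultimately show "\<exists>F1 F2. F1 \<inter> F2 = {} \<and> F1 \<union> F2 = max_cylinders d (Complex th tv)
                \<and> finite F1 \<and> finite F2
                \<and> card F1 = gcd i d \<and> card F2 = gcd (i + 1) d
                \<and> (\<forall>C\<in>F1. \<forall>p\<in>C. leaf_length d (Complex th tv) p = real d / real (gcd i d))
                \<and> (\<forall>C\<in>F2. \<forall>p\<in>C. leaf_length d (Complex th tv) p = real d / real (gcd (i + 1) d))"
      using F1(1) F2(1) unfolding v_def by blast
  }
  {
    assume h: "tv \<in> \<int> \<and> th \<notin> \<int> \<and> \<lfloor>tv\<rfloor> mod int d = int i"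
    define m where "m = \<lfloor>tv\<rfloor>"
    have tvm: "tv = of_int m" using h unfolding m_def by (auto elim: Ints_cases)
    define y0 where "y0 = (1::real) / 2"
    have r0: "regh v y0" unfolding regh_def tvv
    proof
      show "y0 \<notin> \<int>" using nonint_between[of 0 y0] unfolding y0_def by simp
      show "y0 - tv \<notin> \<int>" using nonint_between[of "- m" "y0 - tv"] unfolding y0_def tvm by simp
    qed
    have allsh: "sh v (Im (snd p)) = m" if "p \<in> cyl_pts d v" for p
    proof -
      define y where "y = Im (snd p)"
      have r: "regh v y" using that unfolding cyl_pts_iff[OF d] y_def by simp
      then have "y \<notin> \<int>" unfolding regh_def by simp
      then have "\<lfloor>- y\<rfloor> = - \<lfloor>y\<rfloor> - 1" by (rule floor_minus_nonint)
      moreover have "\<lfloor>tv - y\<rfloor> = m + \<lfloor>- y\<rfloor>" unfolding tvm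
        by (metis floor_add_int diff_conv_add_uminus add.commute)
      ultimately show ?thesis using sh_formula[OF r] tvv unfolding y_def by simp
    qed
    have sh0: "sh v y0 = m"
    proof -
      have "\<lfloor>tv - y0\<rfloor> = m - 1" unfolding tvm y0_def by (simp add: floor_eq_iff)
      moreover have "\<lfloor>y0\<rfloor> = 0" unfolding y0_def by (simp add: floor_eq_iff)
      ultimately show ?thesis using sh_formula[OF r0] tvv by simp
    qed
    obtain F where F: "finite F" "card F = nat (gcd (sh v y0) (int d))" "F \<subseteq> max_cylinders d v"
        "\<forall>C\<in>F. \<forall>p\<in>C. p \<in> cyl_pts d v \<and> sh v (Im (snd p)) = sh v y0"
        "\<forall>p\<in>cyl_pts d v. sh v (Im (snd p)) = sh v y0 \<longrightarrow> cls d v p \<in> F"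
      using family[OF d r0] by blast
    have g: "gcd m (int d) = int (gcd i d)" using gcd_floor_eq h unfolding m_def by blast
    have FM: "F = max_cylinders d v"
    proof
      show "F \<subseteq> max_cylinders d v" by (rule F(3))
      show "max_cylinders d v \<subseteq> F"
      proof
        fix C assume "C \<in> max_cylinders d v"
        then obtain p where p: "p \<in> cyl_pts d v" "C = cls d v p" unfolding maxcyl_def' by blast
        show "C \<in> F" using allsh[OF p(1)] F(5) p sh0 by auto
      qed
    qed
    show "finite (max_cylinders d (Complex th tv))" using F(1) FM unfolding v_def by simp
    show "card (max_cylinders d (Complex th tv)) = gcd i d" using F(2) FM sh0 g unfolding v_def by simp
    show "\<forall>C\<in>max_cylinders d (Complex th tv). \<forall>p\<in>C.
                  leaf_length d (Complex th tv) p = real d / real (gcd i d)"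
      using F(4) FM leaf_in_family[OF d _ _ g] sh0 unfolding v_def by simp
  }
qed

end
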